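(* Let $(\Sigma_+,\Sigma_-,N_1,N_2,N_3)$ be a solution of the Wainwright–Hsu system satisfying the constraint, with $N_1<0$, $N_2=N_3>0$ and $\Sigma_-=0$. Then $\lim_{\tau\to\infty}\Sigma_+=\frac12$, $\lim_{\tau\to\infty}N_1=0$, $\lim_{\tau\to\infty}N_2=\infty$ and $\lim_{\tau\to\infty}N_1N_2=-\frac14$.
   Context: Wainwright–Hsu system: for functions $N_1,N_2,N_3,\Sigma_+,\Sigma_-$ of $\tau\in\mathbb{R}$ (prime denotes $d/d\tau$), $N_1'=(q-4\Sigma_+)N_1$, $N_2'=(q+2\Sigma_++2\sqrt3\Sigma_-)N_2$, $N_3'=(q+2\Sigma_+-2\sqrt3\Sigma_-)N_3$, $\Sigma_+'=-(2-q)\Sigma_+-3S_+$, $\Sigma_-'=-(2-q)\Sigma_--3S_-$, where $q=2(\Sigma_+^2+\Sigma_-^2)$, $S_+=\frac12[(N_2-N_3)^2-N_1(2N_1-N_2-N_3)]$, $S_-=\frac{\sqrt3}{2}(N_3-N_2)(N_1-N_2-N_3)$, together with the constraint $\Sigma_+^2+\Sigma_-^2+\frac34[N_1^2+N_2^2+N_3^2-2(N_1N_2+N_2N_3+N_1N_3)]=1$. The set $\{N_2=N_3,\ \Sigma_-=0\}$ is invariant under the flow. *)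

theory Defs
  imports "HOL-Analysis.Analysis"
begin

definition wh_q :: "real \<Rightarrow> real \<Rightarrow> real" where
  "wh_q sp sm = 2 * (sp^2 + sm^2)"

definition wh_Sp :: "real \<Rightarrow> real \<Rightarrow> real \<Rightarrow> real" where
  "wh_Sp n1 n2 n3 = (1/2) * ((n2 - n3)^2 - n1 * (2*n1 - n2 - n3))"

definition wh_Sm :: "real \<Rightarrow> real \<Rightarrow> real \<Rightarrow> real" where
  "wh_Sm n1 n2 n3 = (sqrt 3 / 2) * (n3 - n2) * (n1 - n2 - n3)"

definition WH_solution ::
  "(real \<Rightarrow> real) \<Rightarrow> (real \<Rightarrow> real) \<Rightarrow> (real \<Rightarrow> real) \<Rightarrow> (real \<Rightarrow> real) \<Rightarrow> (real \<Rightarrow> real) \<Rightarrow> bool"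
where
  "WH_solution N1 N2 N3 Sp Sm \<longleftrightarrow>
    (\<forall>t. (N1 has_real_derivative ((wh_q (Sp t) (Sm t) - 4 * Sp t) * N1 t)) (at t)
       \<and> (N2 has_real_derivative ((wh_q (Sp t) (Sm t) + 2 * Sp t + 2 * sqrt 3 * Sm t) * N2 t)) (at t)
       \<and> (N3 has_real_derivative ((wh_q (Sp t) (Sm t) + 2 * Sp t - 2 * sqrt 3 * Sm t) * N3 t)) (at t)
       \<and> (Sp has_real_derivative (- (2 - wh_q (Sp t) (Sm t)) * Sp t - 3 * wh_Sp (N1 t) (N2 t) (N3 t))) (at t)
       \<and> (Sm has_real_derivative (- (2 - wh_q (Sp t) (Sm t)) * Sm t - 3 * wh_Sm (N1 t) (N2 t) (N3 t))) (at t)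
       \<and> (Sp t)^2 + (Sm t)^2 + (3/4) * ((N1 t)^2 + (N2 t)^2 + (N3 t)^2
            - 2 * (N1 t * N2 t + N2 t * N3 t + N1 t * N3 t)) = 1)"

end

theory Submission
  imports Defs "HOL-Real_Asymp.Real_Asymp"
begin

lemma mvt_lower:
  fixes f f' :: "real \<Rightarrow> real"
  assumes d: "\<And>t. (f has_real_derivative f' t) (at t)"
    and k: "\<And>t. a \<le> t \<Longrightarrow> t \<le> b \<Longrightarrow> f' t \<ge> k" and ab: "a \<le> b"
  shows "f b \<ge> f a + k * (b - a)"
proof (cases "a = b")
  case True then show ?thesis by simp
next
  case False
  then have "a < b" using ab by simp
  from MVT2[OF this d] obtain z where z: "a < z" "z < b" "f b - f a = (b - a) * f' z" by blast
  have "k * (b - a) \<le> f' z * (b - a)" using k[of z] z ab by (intro mult_right_mono) auto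
  then show ?thesis using z by (simp add: algebra_simps)
qed

lemma mvt_upper:
  fixes f f' :: "real \<Rightarrow> real"
  assumes d: "\<And>t. (f has_real_derivative f' t) (at t)"
    and k: "\<And>t. a \<le> t \<Longrightarrow> t \<le> b \<Longrightarrow> f' t \<le> k" and ab: "a \<le> b"
  shows "f b \<le> f a + k * (b - a)"
proof -
  have "(\<lambda>t. - f t) b \<ge> (\<lambda>t. - f t) a + (-k) * (b - a)"
    by (rule mvt_lower[where f'="\<lambda>t. - f' t"]) (auto intro: derivative_intros d k ab)
  then show ?thesis by simp
qed

lemma barrier:
  fixes f f' :: "real \<Rightarrow> real"
  assumes d: "\<And>t. (f has_real_derivative f' t) (at t)"
    and neg: "\<And>t. t \<ge> a \<Longrightarrow> f t \<ge> c \<Longrightarrow> f' t < 0"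
    and fa: "f a < c" and ab: "b \<ge> a"
  shows "f b < c"
proof (rule ccontr)
  assume "\<not> f b < c" hence fb: "f b \<ge> c" by simp
  have cont: "continuous_on {a..b} f"
    using d by (meson DERIV_continuous continuous_at_imp_continuous_on)
  obtain u where u: "u \<in> {a..b}" "\<forall>x\<in>{a..b}. f x \<le> f u"
    using continuous_attains_sup[OF compact_Icc _ cont] ab by auto
  have "f b \<le> f u" using u ab by auto
  hence fu: "f u \<ge> c" using fb by linarith
  hence "u \<noteq> a" using fa by auto
  hence ua: "u > a" using u by auto
  have "f' u < 0" using neg[of u] ua fu by auto
  from DERIV_neg_dec_left[OF d this] obtain e where e: "e > 0" "\<forall>h>0. h < e \<longrightarrow> f u < f (u - h)" by blast
  define h where "h = min (e/2) (u - a)"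
  have "h > 0" "h < e" using e ua by (auto simp: h_def)
  hence "f u < f (u - h)" using e by blast
  moreover have "u - h \<in> {a..b}" using u ua \<open>h>0\<close> by (auto simp: h_def)
  ultimately show False using u by fastforce
qed

lemma m_decay:
  fixes p m :: "real \<Rightarrow> real"
  assumes dm: "\<And>t. (m has_real_derivative (2*(p t)^2 - 4*p t) * m t) (at t)"
    and mneg: "\<And>t. m t < 0" and sl: "\<And>t. t \<ge> T \<Longrightarrow> p t \<ge> 1/4"
    and su: "\<And>t. p t < 1"
  shows "(m \<longlongrightarrow> 0) at_top"
proof -
  define h where "h t = m t * exp (7/8 * t)" for t
  define h' where "h' t = m t * exp (7/8 * t) * (2*(p t)^2 - 4*p t + 7/8)" for t
  have dh: "(h has_real_derivative h' t) (at t)" for t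
    unfolding h_def h'_def
    by (rule derivative_eq_intros dm refl | simp)+ (simp add: algebra_simps)
  have hp: "h' t \<ge> 0" if "t \<ge> T" for t
  proof -
    have "2*(p t)^2 - 4*p t + 7/8 = 2*(p t - 1/4)*(p t - 7/4)" by (simp add: algebra_simps power2_eq_square)
    also have "\<dots> \<le> 0" using sl[OF that] su[of t] by (intro mult_nonneg_nonpos) auto
    finally have "2*(p t)^2 - 4*p t + 7/8 \<le> 0" .
    moreover have "m t * exp (7/8 * t) < 0" using mneg[of t] by (simp add: mult_neg_pos)
    ultimately show ?thesis unfolding h'_def by (simp add: mult_nonpos_nonpos)
  qed
  have lb: "m t \<ge> h T * exp (-(7/8) * t)" if "t \<ge> T" for t
  proof -
    have "h t \<ge> h T + 0 * (t - T)" by (rule mvt_lower[OF dh]) (use hp that in auto)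
    hence "h T \<le> m t * exp (7/8 * t)" by (simp add: h_def)
    hence "h T * exp (-(7/8) * t) \<le> m t * exp (7/8 * t) * exp (-(7/8) * t)" by (simp)
    also have "\<dots> = m t" by (simp add: mult.assoc exp_add[symmetric])
    finally show ?thesis .
  qed
  have lim: "((\<lambda>t. h T * exp (-(7/8) * t)) \<longlongrightarrow> 0) at_top"
    by (rule tendsto_mult_right_zero) real_asymp
  show ?thesis
  proof (rule tendsto_sandwich[OF _ _ lim tendsto_const])
    show "\<forall>\<^sub>F t in at_top. h T * exp (-(7/8) * t) \<le> m t"
      using lb by (auto simp: eventually_at_top_linorder)
    show "\<forall>\<^sub>F t in at_top. m t \<le> 0" using mneg by (simp add: less_imp_le)
  qed
qed
lemma aux: fixes P PT pp M e :: real assumes "P \<ge> PT" "PT > 0" "e > 0" "pp \<ge> 1/2 + e" "M \<ge> 0" "M < 4/3*e*PT" "pp < 1"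
  shows "3*P*(1-2*pp) + 3/2*M*(2-pp) \<le> -(3*e*PT)"
proof -
  have "P*(1-2*pp) \<le> P*(-2*e)" using assms by (intro mult_left_mono) auto
  hence f1: "P - 2*(P*pp) \<le> -2*(e*P)" by (simp add: algebra_simps)
  have f2: "e*PT \<le> e*P" using assms by (intro mult_left_mono) auto
  have "M*(2-pp) \<le> M*(3/2)" using assms by (intro mult_left_mono) auto
  hence f3: "2*M - M*pp \<le> 3/2*M" by (simp add: algebra_simps)
  have eq: "3*P*(1-2*pp) + 3/2*M*(2-pp) = 3*P - 6*(P*pp) + 3*M - 3/2*(M*pp)" by (simp add: field_simps)
  have eq2: "4/3*e*PT = 4/3*(e*PT)" "3*e*PT = 3*(e*PT)" by simp_all
  show ?thesis unfolding eq eq2 using f1 f2 f3 assms(6) unfolding eq2 by linarith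
qed

lemma core:
  fixes p m n :: "real \<Rightarrow> real"
  assumes dm: "\<And>t. (m has_real_derivative (2*(p t)^2 - 4*p t) * m t) (at t)"
    and dn: "\<And>t. (n has_real_derivative (2*(p t)^2 + 2*p t) * n t) (at t)"
    and dp: "\<And>t. (p has_real_derivative (-(2 - 2*(p t)^2) * p t + 3*(m t)^2 - 3*(m t*n t))) (at t)"
    and con: "\<And>t. (p t)^2 + 3/4*(m t)^2 - 3*(m t*n t) = 1"
    and mneg: "\<And>t. m t < 0" and npos: "\<And>t. n t > 0"
  shows "(p \<longlongrightarrow> 1/2) at_top \<and> (m \<longlongrightarrow> 0) at_top \<and> filterlim n at_top at_top
    \<and> ((\<lambda>t. m t * n t) \<longlongrightarrow> -1/4) at_top"
proof -
  define D where "D t = -(2 - 2*(p t)^2) * p t + 3*(m t)^2 - 3*(m t*n t)" for t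
  define P where "P t = -(m t * n t)" for t
  have dp': "(p has_real_derivative D t) (at t)" for t using dp[of t] by (simp add: D_def)
  have mn: "m t * n t < 0" for t using mneg[of t] npos[of t] by (simp add: mult_neg_pos)
  have Ppos: "P t > 0" for t using mn[of t] by (simp add: P_def)
  have Df: "D t = (1 - (p t)^2)*(1 - 2*p t) + 9/4*(m t)^2" for t
  proof -
    have eq: "3*(m t*n t) = (p t)^2 + 3/4*(m t)^2 - 1" using con[of t] by linarith
    show ?thesis unfolding D_def eq by (simp add: algebra_simps power2_eq_square)
  qed
  have Df2: "D t = 3*P t*(1 - 2*p t) + 3/2*(m t)^2*(2 - p t)" for t
  proof -
    have "D t - (3*P t*(1 - 2*p t) + 3/2*(m t)^2*(2 - p t))
        = 2*p t*((p t)^2 + 3/4*(m t)^2 - 3*(m t*n t) - 1)"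
      unfolding D_def P_def by (simp add: field_simps power2_eq_square)
    also have "\<dots> = 0" using con[of t] by simp
    finally show ?thesis by simp
  qed
  have psq: "(p t)^2 < 1" for t using con[of t] mn[of t] zero_le_power2[of "m t"] by linarith
  have pb: "p t < 1" "p t > -1" for t using psq[of t] abs_square_less_1[of "p t"] by auto
  have Dpos: "D t > 0" if "p t \<le> 1/2" for t
  proof -
    have "(1 - (p t)^2)*(1 - 2*p t) \<ge> 0" using psq[of t] that by (intro mult_nonneg_nonneg) auto
    moreover have "(m t)^2 > 0" using mneg[of t] by simp
    ultimately show ?thesis unfolding Df by linarith
  qed
  have slim: "(p \<longlongrightarrow> 1/2) at_top"
  proof (cases "\<exists>T. p T > 1/2")
    case True
    then obtain T where T: "p T > 1/2" by blast
    have pT: "p t > 1/2" if "t \<ge> T" for t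
    proof -
      have "(\<lambda>t. - p t) t < - 1/2"
      proof (rule barrier[where f="\<lambda>t. - p t" and f'="\<lambda>t. - D t" and a=T and b=t and c="-1/2"])
        show "((\<lambda>t. - p t) has_real_derivative - D t) (at t)" for t
          by (intro derivative_intros dp')
        show "- D t < 0" if "t \<ge> T" "- p t \<ge> - 1/2" for t using Dpos[of t] that by simp
      qed (use T that in auto)
      then show ?thesis by simp
    qed
    have mlim: "(m \<longlongrightarrow> 0) at_top"
      by (rule m_decay[OF dm mneg, of T]) (use pT pb in force)+
    have dP: "(P has_real_derivative P t * (4*(p t)^2 - 2*p t)) (at t)" for t
      unfolding P_def
      by (rule derivative_eq_intros dm dn refl | simp)+ (simp add: algebra_simps power2_eq_square)
    have Pmono: "P t \<ge> P T" if "t \<ge> T" for t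
    proof -
      have "P t \<ge> P T + 0 * (t - T)"
      proof (rule mvt_lower[OF dP])
        fix x assume x: "T \<le> x" "x \<le> t"
        have "4*(p x)^2 - 2*p x = 2 * p x * (2 * p x - 1)" by (simp add: algebra_simps power2_eq_square)
        also have "\<dots> \<ge> 0" using pT[of x] x by (intro mult_nonneg_nonneg) auto
        finally show "P x * (4*(p x)^2 - 2*p x) \<ge> 0" using Ppos[of x] by simp
      qed (use that in auto)
      then show ?thesis by simp
    qed
    show ?thesis unfolding tendsto_iff eventually_at_top_linorder dist_real_def
    proof (intro allI impI)
      fix e :: real assume e: "e > 0"
      have "((\<lambda>t. (m t)^2) \<longlongrightarrow> 0^2) at_top" by (intro tendsto_intros mlim)
      hence "((\<lambda>t. (m t)^2) \<longlongrightarrow> 0) at_top" by simp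
      moreover have "0 < 4/3 * e * P T" using e Ppos[of T] by simp
      ultimately have "\<forall>\<^sub>F t in at_top. (m t)^2 < 4/3 * e * P T" by (rule order_tendstoD)
      then obtain T1 where T1: "\<And>t. t \<ge> T1 \<Longrightarrow> (m t)^2 < 4/3 * e * P T"
        by (auto simp: eventually_at_top_linorder)
      define T2 where "T2 = max T T1"
      have Dneg: "D t \<le> -(3*e*P T)" if "t \<ge> T2" "p t \<ge> 1/2 + e" for t
        unfolding Df2 using Pmono[of t] Ppos[of T] e that T1[of t] pb[of t]
        by (intro aux) (auto simp: T2_def)
      have eP: "3*e*P T > 0" using e Ppos[of T] by simp
      have ex: "\<exists>t1\<ge>T2. p t1 < 1/2 + e"
      proof (rule ccontr)
        assume "\<not> ?thesis"
        hence all: "\<And>t. t \<ge> T2 \<Longrightarrow> p t \<ge> 1/2 + e" by force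
        define t where "t = T2 + 1/(3*e*P T)"
        have tt: "t \<ge> T2" using eP by (simp add: t_def)
        have "p t \<le> p T2 + (-(3*e*P T)) * (t - T2)"
          by (rule mvt_upper[OF dp']) (use Dneg all tt in auto)
        also have "\<dots> = p T2 - 1" using eP e Ppos[of T] by (simp add: t_def)
        finally have "p t < 0" using pb[of T2] by simp
        then show False using all[OF tt] e by simp
      qed
      then obtain t1 where t1: "t1 \<ge> T2" "p t1 < 1/2 + e" by blast
      have up: "p t < 1/2 + e" if "t \<ge> t1" for t
      proof (rule barrier[OF dp' _ t1(2) that])
        fix x assume "x \<ge> t1" "p x \<ge> 1/2 + e"
        then show "D x < 0" using Dneg[of x] t1 eP by simp
      qed
      show "\<exists>N. \<forall>t\<ge>N. \<bar>p t - 1/2\<bar> < e"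
      proof (intro exI allI impI)
        fix t assume "max t1 T \<le> t"
        then show "\<bar>p t - 1/2\<bar> < e" using up[of t] pT[of t] by auto
      qed
    qed
  next
    case False
    hence ph: "p t \<le> 1/2" for t by (simp add: not_less)
    have pmono: "p b \<ge> p a" if "a \<le> b" for a b
    proof -
      have "p b \<ge> p a + 0 * (b - a)"
        by (rule mvt_lower[OF dp']) (use Dpos ph that in \<open>auto intro: less_imp_le\<close>)
      then show ?thesis by simp
    qed
    show ?thesis unfolding tendsto_iff eventually_at_top_linorder dist_real_def
    proof (intro allI impI)
      fix e :: real assume e: "e > 0"
      have ex: "\<exists>t1. p t1 > 1/2 - e"
      proof (rule ccontr)
        assume "\<not> ?thesis"
        hence all: "p t \<le> 1/2 - e" for t by (simp add: not_less)
        define d where "d = e * (1 + p 0)"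
        have d: "d > 0" using e pb[of 0] by (simp add: d_def)
        have Dl: "D t \<ge> d" if "t \<ge> 0" for t
        proof -
          have p0: "p t \<ge> p 0" using pmono that by simp
          have h1: "(1 + p 0)*(2*e) \<le> (1 + p t)*(1 - 2*p t)"
            using p0 all[of t] pb[of 0] e by (intro mult_mono) auto
          have h2: "1/2 * ((1 + p 0)*(2*e)) \<le> (1 - p t)*((1 + p t)*(1 - 2*p t))"
            apply (rule mult_mono) using h1 all[of t] e pb[of 0] pb[of t] p0 by auto
          have eq: "(1 - (p t)^2)*(1 - 2*p t) = (1 - p t)*((1 + p t)*(1 - 2*p t))"
            by (simp add: algebra_simps power2_eq_square)
          have A: "1/2 * ((1 + p 0)*(2*e)) = e*(1 + p 0)" by simp
          have h3: "e*(1 + p 0) \<le> (1 - (p t)^2)*(1 - 2*p t)" using h2 unfolding A eq .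
          show ?thesis unfolding Df d_def using h3 zero_le_power2[of "m t"] by linarith
        qed
        define t where "t = 2 / d"
        have t0: "t \<ge> 0" using d by (simp add: t_def)
        have "p t \<ge> p 0 + d * (t - 0)"
          by (rule mvt_lower[OF dp']) (use Dl t0 in auto)
        moreover have "p 0 + d * (t - 0) = p 0 + 2" using d by (simp add: t_def)
        ultimately have "p t > 1" using pb[of 0] by simp
        then show False using ph[of t] by simp
      qed
      then obtain t1 where t1: "p t1 > 1/2 - e" by blast
      show "\<exists>N. \<forall>t\<ge>N. \<bar>p t - 1/2\<bar> < e"
      proof (intro exI allI impI)
        fix t assume "t1 \<le> t"
        then show "\<bar>p t - 1/2\<bar> < e" using pmono[of t1 t] t1 ph[of t] by auto
      qed
    qed
  qed
  have "\<forall>\<^sub>F t in at_top. 1/4 < p t" using slim by (rule order_tendstoD) simp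
  then obtain T where T: "\<And>t. t \<ge> T \<Longrightarrow> 1/4 < p t" by (auto simp: eventually_at_top_linorder)
  have mlim: "(m \<longlongrightarrow> 0) at_top"
    by (rule m_decay[OF dm mneg, of T]) (use T pb in \<open>auto intro: less_imp_le\<close>)
  have Peq: "P t = (1 - (p t)^2 - 3/4*(m t)^2) / 3" for t using con[of t] by (simp add: P_def)
  have "((\<lambda>t. (1 - (p t)^2 - 3/4*(m t)^2) / 3) \<longlongrightarrow> (1 - (1/2)^2 - 3/4*0^2) / 3) at_top"
    by (intro tendsto_intros slim mlim) auto
  hence Plim: "(P \<longlongrightarrow> 1/4) at_top" by (simp add: Peq[abs_def] power2_eq_square)
  have mnlim: "((\<lambda>t. m t * n t) \<longlongrightarrow> -1/4) at_top"
  proof -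
    have "((\<lambda>t. - P t) \<longlongrightarrow> - (1/4)) at_top" by (intro tendsto_intros Plim)
    then show ?thesis by (simp add: P_def)
  qed
  have neq: "n = (\<lambda>t. P t * inverse (- m t))"
    using mneg by (auto simp: P_def fun_eq_iff field_simps less_imp_neq)
  have "filterlim (\<lambda>t. P t * inverse (- m t)) at_top at_top"
  proof (rule filterlim_tendsto_pos_mult_at_top[OF Plim])
    show "filterlim (\<lambda>t. inverse (- m t)) at_top at_top"
    proof (rule filterlim_inverse_at_top)
      show "((\<lambda>t. - m t) \<longlongrightarrow> 0) at_top" using tendsto_minus[OF mlim] by simp
      show "\<forall>\<^sub>F t in at_top. 0 < - m t" using mneg by simp
    qed
  qed simp
  then have nlim: "filterlim n at_top at_top" using neq by simp
  show ?thesis using slim mlim nlim mnlim by blast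
qed


theorem mainTheorem13:
  fixes N1 N2 N3 Sp Sm :: "real \<Rightarrow> real"
  assumes "WH_solution N1 N2 N3 Sp Sm"
    and "\<forall>t. N1 t < 0"
    and "\<forall>t. N2 t = N3 t \<and> N2 t > 0"
    and "\<forall>t. Sm t = 0"
  shows "(Sp \<longlongrightarrow> 1/2) at_top
    \<and> (N1 \<longlongrightarrow> 0) at_top
    \<and> filterlim N2 at_top at_top
    \<and> ((\<lambda>t. N1 t * N2 t) \<longlongrightarrow> -1/4) at_top"
proof -
  have W: "\<And>t. (N1 has_real_derivative ((wh_q (Sp t) (Sm t) - 4 * Sp t) * N1 t)) (at t)
       \<and> (N2 has_real_derivative ((wh_q (Sp t) (Sm t) + 2 * Sp t + 2 * sqrt 3 * Sm t) * N2 t)) (at t)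
       \<and> (Sp has_real_derivative (- (2 - wh_q (Sp t) (Sm t)) * Sp t - 3 * wh_Sp (N1 t) (N2 t) (N3 t))) (at t)
       \<and> (Sp t)^2 + (Sm t)^2 + (3/4) * ((N1 t)^2 + (N2 t)^2 + (N3 t)^2
            - 2 * (N1 t * N2 t + N2 t * N3 t + N1 t * N3 t)) = 1"
    using assms(1) unfolding WH_solution_def by blast
  have e3: "N3 t = N2 t" for t using assms(3) by metis
  have e0: "Sm t = 0" for t using assms(4) by blast
  have q0: "wh_q x 0 = 2*x^2" for x by (simp add: wh_q_def)
  have q: "wh_q (Sp t) (Sm t) = 2*(Sp t)^2" for t by (simp add: wh_q_def e0)
  show ?thesis
  proof (rule core)
    show "(N1 has_real_derivative (2*(Sp t)^2 - 4*Sp t) * N1 t) (at t)" for t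
      using W[of t] by (simp add: q0 e0)
    show "(N2 has_real_derivative (2*(Sp t)^2 + 2*Sp t) * N2 t) (at t)" for t
      using W[of t] by (simp add: q0 e0)
    show "(Sp has_real_derivative (-(2 - 2*(Sp t)^2) * Sp t + 3*(N1 t)^2 - 3*(N1 t*N2 t))) (at t)" for t
    proof -
      have "- (2 - wh_q (Sp t) (Sm t)) * Sp t - 3 * wh_Sp (N1 t) (N2 t) (N3 t)
          = -(2 - 2*(Sp t)^2) * Sp t + 3*(N1 t)^2 - 3*(N1 t*N2 t)"
        by (simp add: q e3 wh_Sp_def algebra_simps power2_eq_square)
      then show ?thesis using W[of t] by simp
    qed
    show "(Sp t)^2 + 3/4*(N1 t)^2 - 3*(N1 t*N2 t) = 1" for t
    proof -
      have "(Sp t)^2 + (Sm t)^2 + (3/4) * ((N1 t)^2 + (N2 t)^2 + (N3 t)^2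
            - 2 * (N1 t * N2 t + N2 t * N3 t + N1 t * N3 t)) = (Sp t)^2 + 3/4*(N1 t)^2 - 3*(N1 t*N2 t)"
        by (simp add: e3 e0 algebra_simps power2_eq_square)
      then show ?thesis using W[of t] by simp
    qed
    show "N1 t < 0" for t using assms(2) by blast
    show "N2 t > 0" for t using assms(3) by blast
  qed
qed

end
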